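(* Let $\mathcal N$ be a network with parties $A_1,\dots,A_n$ all of whose sources are bipartite, let $p$ be the output distribution of a causally consistent model on $\mathcal N$ (finite output alphabets), and let $f_i$ be arbitrary complex-valued functions of the outputs $a_i$. Let $\epsilon$ assign to each source $\alpha$ a complex number $\epsilon(\alpha)$ with $|\epsilon(\alpha)|=1$, and let $\Gamma_\epsilon=(\gamma_{ij})$ be an $n\times n$ Hermitian matrix with $\gamma_{ii}=1$, $\gamma_{ij}=\epsilon(\alpha)$ if $i<j$ and $\alpha\to i,j$, and $\gamma_{ij}=\overline{\epsilon(\alpha)}$ if $i>j$ and $\alpha\to i,j$ (other entries arbitrary). Then $\mathcal C(f_1,\dots,f_n)\circ\Gamma_\epsilon$ is positive semidefinite.
   Context: A network $\mathcal N$ is a bipartite graph between sources $S_\alpha$ and parties $A_i$ ($i=1,\dots,n$); $\alpha\to i$ means $S_\alpha$ is adjacent to $A_i$; no isolated vertices, and no two sources with comparable sets of adjacent parties. Here every source is adjacent to exactly two parties. Covariance matrix: $\mathcal C(f_1,\dots,f_n)_{ij}=\mathbb E[\bar f_i f_j]-\mathbb E[\bar f_i]\,\mathbb E[f_j]$. The Schur product is $(M\circ N)_{ij}=M_{ij}N_{ij}$. Non-fanout inflation of order $d\ge 2$: choose, for every pair $(\alpha,i)$ with $\alpha\to i$, a permutation $\pi_i^\alpha$ of $\{1,\dots,d\}$. The inflated network has parties $A_i^{(k)}$ and sources $S_\alpha^{(k)}$ ($1\le k\le d$), with $S_\alpha^{(k)}$ adjacent to $A_i^{((\pi_i^\alpha)^{-1}(k))}$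 whenever $\alpha\to i$, and no other adjacencies. Causally consistent model on $\mathcal N$: a joint distribution $p(a_1,\dots,a_n)$ of the outputs of $\mathcal N$ together with, for every non-fanout inflation of every order $d\ge2$, a joint distribution of the outputs $a_i^{(k)}$ of its parties, such that: (C0) if $A_i\neq A_j$ share no source in $\mathcal N$, then $p(a_i,a_j)=p(a_i)p(a_j)$; (C1) in every inflation, each $a_i^{(k)}$ has marginal $p(a_i)$, and if $A_i^{(k)}$ and $A_j^{(l)}$ with $i\neq j$ share a source in the inflation, then $(a_i^{(k)},a_j^{(l)})$ has joint distribution $p(a_i,a_j)$; (C2) in every inflation, if two distinct parties share no source, the joint distribution of their outputs is the product of their marginals. *)

theory Defs
  imports "HOL-Probability.Probability"
begin

text \<open>Network with parties 1..n (indices i in {1..n}) and a finite set S of sources;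
  adj alpha is the set of parties adjacent to source alpha (alpha -> i iff i in adj alpha).\<close>

definition bipartite_network :: "nat \<Rightarrow> 's set \<Rightarrow> ('s \<Rightarrow> nat set) \<Rightarrow> bool" where
  "bipartite_network n S adj \<longleftrightarrow>
     finite S \<and>
     (\<forall>\<alpha>\<in>S. adj \<alpha> \<subseteq> {1..n} \<and> card (adj \<alpha>) = 2) \<and>
     (\<forall>i\<in>{1..n}. \<exists>\<alpha>\<in>S. i \<in> adj \<alpha>) \<and>
     (\<forall>\<alpha>\<in>S. \<forall>\<beta>\<in>S. \<alpha> \<noteq> \<beta> \<longrightarrow> \<not> (adj \<alpha> \<subseteq> adj \<beta>))"

definition share_source :: "'s set \<Rightarrow> ('s \<Rightarrow> nat set) \<Rightarrow> nat \<Rightarrow> nat \<Rightarrow> bool" where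
  "share_source S adj i j \<longleftrightarrow> (\<exists>\<alpha>\<in>S. i \<in> adj \<alpha> \<and> j \<in> adj \<alpha>)"

definition valid_perms :: "nat \<Rightarrow> 's set \<Rightarrow> ('s \<Rightarrow> nat set) \<Rightarrow> ('s \<Rightarrow> nat \<Rightarrow> nat \<Rightarrow> nat) \<Rightarrow> bool" where
  "valid_perms d S adj \<pi> \<longleftrightarrow> (\<forall>\<alpha>\<in>S. \<forall>i\<in>adj \<alpha>. \<pi> \<alpha> i permutes {1..d})"

text \<open>In the inflation, party A_i^(k) is adjacent to source S_alpha^(pi alpha i k) (alpha -> i),
  since S_alpha^(m) is adjacent to A_i^((pi alpha i)^-1 m).
  infl_share: parties (i,k) and (j,l) share a source in the inflation.\<close>
definition infl_share :: "'s set \<Rightarrow> ('s \<Rightarrow> nat set) \<Rightarrow> ('s \<Rightarrow> nat \<Rightarrow> nat \<Rightarrow> nat)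
    \<Rightarrow> nat \<times> nat \<Rightarrow> nat \<times> nat \<Rightarrow> bool" where
  "infl_share S adj \<pi> p q \<longleftrightarrow>
     (\<exists>\<alpha>\<in>S. fst p \<in> adj \<alpha> \<and> fst q \<in> adj \<alpha> \<and> \<pi> \<alpha> (fst p) (snd p) = \<pi> \<alpha> (fst q) (snd q))"

definition marg1 :: "('i \<Rightarrow> 'a) pmf \<Rightarrow> 'i \<Rightarrow> 'a pmf" where
  "marg1 P i = map_pmf (\<lambda>x. x i) P"

definition marg2 :: "('i \<Rightarrow> 'a) pmf \<Rightarrow> 'i \<Rightarrow> 'i \<Rightarrow> ('a \<times> 'a) pmf" where
  "marg2 P i j = map_pmf (\<lambda>x. (x i, x j)) P"

text \<open>Causally consistent model: P is the output distribution on the network (outputs a_i, i in {1..n});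
  Q d pi is the output distribution of the non-fanout inflation of order d given by the
  permutations pi, with outputs indexed by (i,k), i in {1..n}, k in {1..d}.\<close>
definition causally_consistent ::
  "nat \<Rightarrow> 's set \<Rightarrow> ('s \<Rightarrow> nat set) \<Rightarrow> (nat \<Rightarrow> 'a) pmf
    \<Rightarrow> (nat \<Rightarrow> ('s \<Rightarrow> nat \<Rightarrow> nat \<Rightarrow> nat) \<Rightarrow> (nat \<times> nat \<Rightarrow> 'a) pmf) \<Rightarrow> bool" where
  "causally_consistent n S adj P Q \<longleftrightarrow>
     \<comment> \<open>C0\<close>
     (\<forall>i\<in>{1..n}. \<forall>j\<in>{1..n}. i \<noteq> j \<and> \<not> share_source S adj i j \<longrightarrow>
        marg2 P i j = pair_pmf (marg1 P i) (marg1 P j)) \<and>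
     (\<forall>d \<pi>. d \<ge> 2 \<and> valid_perms d S adj \<pi> \<longrightarrow>
        \<comment> \<open>C1\<close>
        (\<forall>i\<in>{1..n}. \<forall>k\<in>{1..d}. marg1 (Q d \<pi>) (i, k) = marg1 P i) \<and>
        (\<forall>i\<in>{1..n}. \<forall>k\<in>{1..d}. \<forall>j\<in>{1..n}. \<forall>l\<in>{1..d}.
           i \<noteq> j \<and> infl_share S adj \<pi> (i, k) (j, l) \<longrightarrow>
             marg2 (Q d \<pi>) (i, k) (j, l) = marg2 P i j) \<and>
        \<comment> \<open>C2\<close>
        (\<forall>i\<in>{1..n}. \<forall>k\<in>{1..d}. \<forall>j\<in>{1..n}. \<forall>l\<in>{1..d}.
           (i, k) \<noteq> (j, l) \<and> \<not> infl_share S adj \<pi> (i, k) (j, l) \<longrightarrow>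
             marg2 (Q d \<pi>) (i, k) (j, l) = pair_pmf (marg1 (Q d \<pi>) (i, k)) (marg1 (Q d \<pi>) (j, l))))"

definition covariance :: "(nat \<Rightarrow> 'a) pmf \<Rightarrow> (nat \<Rightarrow> 'a \<Rightarrow> complex) \<Rightarrow> nat \<Rightarrow> nat \<Rightarrow> complex" where
  "covariance P f i j =
     measure_pmf.expectation P (\<lambda>x. cnj (f i (x i)) * f j (x j))
     - cnj (measure_pmf.expectation P (\<lambda>x. f i (x i))) * measure_pmf.expectation P (\<lambda>x. f j (x j))"

definition schur_prod :: "(nat \<Rightarrow> nat \<Rightarrow> complex) \<Rightarrow> (nat \<Rightarrow> nat \<Rightarrow> complex) \<Rightarrow> nat \<Rightarrow> nat \<Rightarrow> complex" where
  "schur_prod M N i j = M i j * N i j"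

definition psd :: "nat \<Rightarrow> (nat \<Rightarrow> nat \<Rightarrow> complex) \<Rightarrow> bool" where
  "psd n M \<longleftrightarrow>
     (\<forall>i\<in>{1..n}. \<forall>j\<in>{1..n}. M j i = cnj (M i j)) \<and>
     (\<forall>v :: nat \<Rightarrow> complex.
        let q = (\<Sum>i\<in>{1..n}. \<Sum>j\<in>{1..n}. cnj (v i) * M i j * v j) in Im q = 0 \<and> Re q \<ge> 0)"

end

theory Submission
  imports Defs
begin


lemma cis_minus_one_bound: "cmod (cis t - 1) \<le> \<bar>t\<bar>"
proof -
  have "(cmod (cis t - 1))^2 = (cos t - 1)^2 + (sin t)^2"
    by (simp add: cmod_def)
  also have "\<dots> = 2 - 2 * cos t" using sin_cos_squared_add[of t] by (simp add: power2_eq_square algebra_simps)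
  also have "\<dots> = 4 * (sin (t/2))^2" using cos_double_sin[of "t/2"] by simp
  also have "\<dots> \<le> 4 * (t/2)^2"
    using abs_sin_x_le_abs_x[of "t/2"]
    by (metis abs_ge_zero mult_left_mono power2_abs power_mono zero_le_numeral)
  also have "\<dots> = t^2" by (simp add: power2_eq_square)
  finally have "(cmod (cis t - 1))^2 \<le> \<bar>t\<bar>^2" by simp
  then show ?thesis by (rule power2_le_imp_le) simp
qed

lemma cis_lip: "cmod (cis a - cis b) \<le> \<bar>a - b\<bar>"
proof -
  have "cis a - cis b = cis b * (cis (a - b) - 1)"
    by (simp add: algebra_simps cis_mult)
  then have "cmod (cis a - cis b) = cmod (cis (a - b) - 1)" by (simp add: norm_mult)
  then show ?thesis using cis_minus_one_bound by simp
qed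

lemma approx_root:
  assumes "cmod z = 1" "d > (0::nat)"
  shows "\<exists>s::nat. cmod (cis (2*pi/d) ^ s - z) \<le> 2*pi/d"
proof -
  define \<theta> where "\<theta> = Arg z + 2*pi"
  have zc: "z = cis \<theta>"
  proof -
    have "z \<noteq> 0" using assms(1) by auto
    then have "cis (Arg z) = z" using cis_Arg[of z] assms(1) by (simp add: sgn_div_norm)
    moreover have "cis \<theta> = cis (Arg z)" unfolding \<theta>_def by (simp add: cis_mult[symmetric])
    ultimately show ?thesis by simp
  qed
  have th0: "\<theta> \<ge> 0" using Arg_bounded[of z] unfolding \<theta>_def by simp
  define s where "s = nat \<lfloor>\<theta> * d / (2*pi)\<rfloor>"
  have dp: "real d > 0" using assms by simp
  have s1: "real s \<le> \<theta> * d / (2*pi)" unfolding s_def using th0 dp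
    by (simp add: of_nat_nat)
  have s2: "\<theta> * d / (2*pi) < real s + 1" unfolding s_def using th0 dp
    by linarith
  have e1: "real s * (2*pi/d) \<le> \<theta>" using s1 dp by (simp add: field_simps)
  have e2: "\<theta> < real s * (2*pi/d) + 2*pi/d" using s2 dp by (simp add: field_simps)
  have "cis (2*pi/d) ^ s = cis (real s * (2*pi/d))" by (rule Complex.DeMoivre)
  then have "cmod (cis (2*pi/d) ^ s - z) \<le> \<bar>real s * (2*pi/d) - \<theta>\<bar>"
    using zc cis_lip by simp
  also have "\<dots> \<le> 2*pi/d" using e1 e2 by simp
  finally show ?thesis by blast
qed



lemma L0:
  fixes X :: "'p \<Rightarrow> 'g \<Rightarrow> complex" and \<mu> :: "'g \<Rightarrow> real" and w :: "'p \<Rightarrow> complex"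
  assumes A: "finite A" and I: "finite I" and mu0: "\<And>g. \<mu> g \<ge> 0" and mu1: "sum \<mu> A = 1"
  defines "m \<equiv> \<lambda>p. \<Sum>g\<in>A. of_real (\<mu> g) * X p g"
  shows "0 \<le> Re (\<Sum>p\<in>I. \<Sum>q\<in>I. cnj (w p) * w q *
            ((\<Sum>g\<in>A. of_real (\<mu> g) * (cnj (X p g) * X q g)) - cnj (m p) * m q))"
proof -
  define Y where "Y = (\<lambda>g. \<Sum>p\<in>I. w p * (X p g - m p))"
  have cm: "(\<Sum>g\<in>A. of_real (\<mu> g) * cnj (X p g)) = cnj (m p)" for p
    unfolding m_def by (simp add: cnj_sum)
  have mu1c: "(\<Sum>g\<in>A. complex_of_real (\<mu> g)) = 1" using mu1
    by (metis of_real_1 of_real_sum)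
  have key: "(\<Sum>g\<in>A. of_real (\<mu> g) * (cnj (X p g - m p) * (X q g - m q)))
      = (\<Sum>g\<in>A. of_real (\<mu> g) * (cnj (X p g) * X q g)) - cnj (m p) * m q" for p q
  proof -
    have "(\<Sum>g\<in>A. of_real (\<mu> g) * (cnj (X p g - m p) * (X q g - m q)))
      = (\<Sum>g\<in>A. of_real (\<mu> g) * (cnj (X p g) * X q g))
        - (\<Sum>g\<in>A. of_real (\<mu> g) * cnj (X p g)) * m q
        - cnj (m p) * (\<Sum>g\<in>A. of_real (\<mu> g) * X q g)
        + cnj (m p) * m q * (\<Sum>g\<in>A. complex_of_real (\<mu> g))"
      by (simp add: algebra_simps sum_subtractf sum.distrib sum_distrib_left sum_distrib_right)
    also have "\<dots> = (\<Sum>g\<in>A. of_real (\<mu> g) * (cnj (X p g) * X q g)) - cnj (m p) * m q"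
      using cm mu1c unfolding m_def[symmetric] by (simp add: m_def)
    finally show ?thesis .
  qed
  have "(\<Sum>g\<in>A. of_real (\<mu> g) * (cnj (Y g) * Y g))
      = (\<Sum>g\<in>A. \<Sum>p\<in>I. \<Sum>q\<in>I. cnj (w p) * w q * (of_real (\<mu> g) * (cnj (X p g - m p) * (X q g - m q))))"
  proof (rule sum.cong[OF refl])
    fix g
    have "cnj (Y g) * Y g = (\<Sum>p\<in>I. cnj (w p) * cnj (X p g - m p)) * (\<Sum>q\<in>I. w q * (X q g - m q))"
      unfolding Y_def by (simp add: cnj_sum)
    also have "\<dots> = (\<Sum>p\<in>I. \<Sum>q\<in>I. cnj (w p) * cnj (X p g - m p) * (w q * (X q g - m q)))"
      by (rule sum_product)
    finally have e: "cnj (Y g) * Y g = (\<Sum>p\<in>I. \<Sum>q\<in>I. cnj (w p) * cnj (X p g - m p) * (w q * (X q g - m q)))" .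
    show "of_real (\<mu> g) * (cnj (Y g) * Y g) = (\<Sum>p\<in>I. \<Sum>q\<in>I. cnj (w p) * w q * (of_real (\<mu> g) * (cnj (X p g - m p) * (X q g - m q))))"
      unfolding e sum_distrib_left
      by (rule sum.cong[OF refl], rule sum.cong[OF refl]) (simp add: mult_ac)
  qed
  also have "\<dots> = (\<Sum>p\<in>I. \<Sum>q\<in>I. cnj (w p) * w q * (\<Sum>g\<in>A. of_real (\<mu> g) * (cnj (X p g - m p) * (X q g - m q))))"
    by (simp add: sum_distrib_left sum.swap[of _ A])
  also have "\<dots> = (\<Sum>p\<in>I. \<Sum>q\<in>I. cnj (w p) * w q *
            ((\<Sum>g\<in>A. of_real (\<mu> g) * (cnj (X p g) * X q g)) - cnj (m p) * m q))"
    using key by simp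
  finally have eq: "(\<Sum>g\<in>A. of_real (\<mu> g) * (cnj (Y g) * Y g)) = (\<Sum>p\<in>I. \<Sum>q\<in>I. cnj (w p) * w q *
            ((\<Sum>g\<in>A. of_real (\<mu> g) * (cnj (X p g) * X q g)) - cnj (m p) * m q))" .
  have "cnj (Y g) * Y g = of_real ((cmod (Y g))^2)" for g
    using complex_norm_square[of "Y g"] by (simp add: mult.commute)
  then have "Re (\<Sum>g\<in>A. of_real (\<mu> g) * (cnj (Y g) * Y g)) = (\<Sum>g\<in>A. \<mu> g * (cmod (Y g))^2)"
    by (simp add: Re_sum)
  also have "\<dots> \<ge> 0" using mu0 by (intro sum_nonneg) simp
  finally show ?thesis using eq by simp
qed

definition cov2 :: "('a::finite \<times> 'a) pmf \<Rightarrow> ('a \<Rightarrow> complex) \<Rightarrow> ('a \<Rightarrow> complex) \<Rightarrow> complex" where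
  "cov2 M g h = (\<Sum>ab\<in>UNIV. of_real (pmf M ab) * (cnj (g (fst ab)) * h (snd ab)))
     - cnj (\<Sum>ab\<in>UNIV. of_real (pmf M ab) * g (fst ab)) * (\<Sum>ab\<in>UNIV. of_real (pmf M ab) * h (snd ab))"

lemma exp_marg2:
  fixes R :: "('i \<Rightarrow> 'a::finite) pmf" and h :: "'a \<Rightarrow> 'a \<Rightarrow> complex"
  shows "measure_pmf.expectation R (\<lambda>x. h (x p) (x q)) = (\<Sum>ab\<in>UNIV. of_real (pmf (marg2 R p q) ab) * h (fst ab) (snd ab))"
proof -
  have "(\<Sum>ab\<in>UNIV. of_real (pmf (marg2 R p q) ab) * h (fst ab) (snd ab))
     = measure_pmf.expectation (marg2 R p q) (\<lambda>ab. h (fst ab) (snd ab))"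
    by (subst integral_measure_pmf[of UNIV]) (auto simp: scaleR_conv_of_real)
  also have "\<dots> = measure_pmf.expectation R (\<lambda>x. h (x p) (x q))"
    unfolding marg2_def by simp
  finally show ?thesis by simp
qed

lemma cov_marg2: "covariance P f i j = cov2 (marg2 P i j) (f i) (f j)"
  unfolding covariance_def cov2_def
  using exp_marg2[of P "\<lambda>a b. cnj (f i a) * f j b" i j] exp_marg2[of P "\<lambda>a b. f i a" i j]
    exp_marg2[of P "\<lambda>a b. f j b" i j]
  by simp

lemma sum_UNIV_pair: "(\<Sum>ab\<in>(UNIV::('a::finite \<times> 'b::finite) set). F ab) = (\<Sum>a\<in>UNIV. \<Sum>b\<in>UNIV. F (a, b))"
  unfolding UNIV_Times_UNIV[symmetric] by (subst sum.cartesian_product) simp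

lemma cov2_pair: "cov2 (pair_pmf A B) g h = 0"
proof -
  have U: "(UNIV :: ('a \<times> 'a) set) = UNIV \<times> UNIV" by simp
  have sA: "(\<Sum>a\<in>UNIV. complex_of_real (pmf A a)) = 1"
    by (metis of_real_1 of_real_sum sum_pmf_eq_1 finite subset_UNIV)
  have sB: "(\<Sum>a\<in>UNIV. complex_of_real (pmf B a)) = 1"
    by (metis of_real_1 of_real_sum sum_pmf_eq_1 finite subset_UNIV)
  have "(\<Sum>ab\<in>UNIV. of_real (pmf (pair_pmf A B) ab) * (cnj (g (fst ab)) * h (snd ab)))
      = (\<Sum>a\<in>UNIV. of_real (pmf A a) * cnj (g a)) * (\<Sum>b\<in>UNIV. of_real (pmf B b) * h b)"
    unfolding sum_UNIV_pair sum_product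
    by (rule sum.cong[OF refl], rule sum.cong[OF refl]) (simp add: pmf_pair mult_ac)
  moreover have "(\<Sum>ab\<in>UNIV. of_real (pmf (pair_pmf A B) ab) * g (fst ab))
      = (\<Sum>a\<in>UNIV. of_real (pmf A a) * g a)"
  proof -
    have "(\<Sum>a\<in>UNIV. \<Sum>b\<in>UNIV. of_real (pmf (pair_pmf A B) (a,b)) * g (fst (a,b)))
        = (\<Sum>a\<in>UNIV. (of_real (pmf A a) * g a) * (\<Sum>b\<in>UNIV. complex_of_real (pmf B b)))"
      by (simp add: pmf_pair sum_distrib_left mult_ac)
    then show ?thesis using sB unfolding sum_UNIV_pair by simp
  qed
  moreover have "(\<Sum>ab\<in>UNIV. of_real (pmf (pair_pmf A B) ab) * h (snd ab))
      = (\<Sum>b\<in>UNIV. of_real (pmf B b) * h b)"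
  proof -
    have "(\<Sum>a\<in>UNIV. \<Sum>b\<in>UNIV. of_real (pmf (pair_pmf A B) (a,b)) * h (snd (a,b)))
        = (\<Sum>b\<in>UNIV. (of_real (pmf B b) * h b) * (\<Sum>a\<in>UNIV. complex_of_real (pmf A a)))"
      by (subst sum.swap) (simp add: pmf_pair sum_distrib_left mult_ac)
    then show ?thesis using sA unfolding sum_UNIV_pair by simp
  qed
  ultimately show ?thesis unfolding cov2_def by (simp add: cnj_sum)
qed



lemma L2:
  fixes R :: "('i \<Rightarrow> 'a::finite) pmf" and F :: "'i \<Rightarrow> 'a \<Rightarrow> complex" and w :: "'i \<Rightarrow> complex"
  assumes I: "finite I"
  shows "0 \<le> Re (\<Sum>p\<in>I. \<Sum>q\<in>I. cnj (w p) * w q * cov2 (marg2 R p q) (F p) (F q))"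
proof -
  define A where "A = PiE I (\<lambda>_. UNIV :: 'a set)"
  define M where "M = map_pmf (\<lambda>x. restrict x I) R"
  define \<mu> where "\<mu> = (\<lambda>g. pmf M g)"
  have fA: "finite A" unfolding A_def using I by (simp add: finite_PiE)
  have sM: "set_pmf M \<subseteq> A" unfolding M_def A_def by auto
  have mu1: "sum \<mu> A = 1" unfolding \<mu>_def using sum_pmf_eq_1[OF fA sM] .
  have conv: "(\<Sum>ab\<in>UNIV. of_real (pmf (marg2 R p q) ab) * h (fst ab) (snd ab))
      = (\<Sum>g\<in>A. of_real (\<mu> g) * h (g p) (g q))" if "p \<in> I" "q \<in> I" for p q and h :: "'a \<Rightarrow> 'a \<Rightarrow> complex"
  proof -
    have "(\<Sum>g\<in>A. of_real (\<mu> g) * h (g p) (g q)) = measure_pmf.expectation M (\<lambda>g. h (g p) (g q))"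
      unfolding \<mu>_def using sM
      by (subst integral_measure_pmf[OF fA]) (auto simp: scaleR_conv_of_real)
    also have "\<dots> = measure_pmf.expectation R (\<lambda>x. h (x p) (x q))"
      unfolding M_def using that by simp
    finally show ?thesis using exp_marg2[of R h p q] by simp
  qed
  have c: "cov2 (marg2 R p q) (F p) (F q) =
      (\<Sum>g\<in>A. of_real (\<mu> g) * (cnj (F p (g p)) * F q (g q)))
      - cnj (\<Sum>g\<in>A. of_real (\<mu> g) * F p (g p)) * (\<Sum>g\<in>A. of_real (\<mu> g) * F q (g q))"
    if "p \<in> I" "q \<in> I" for p q
    unfolding cov2_def
    using conv[OF that, of "\<lambda>a b. cnj (F p a) * F q b"] conv[OF that, of "\<lambda>a b. F p a"]
      conv[OF that, of "\<lambda>a b. F q b"] by simp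
  have "0 \<le> Re (\<Sum>p\<in>I. \<Sum>q\<in>I. cnj (w p) * w q *
            ((\<Sum>g\<in>A. of_real (\<mu> g) * (cnj (F p (g p)) * F q (g q)))
             - cnj (\<Sum>g\<in>A. of_real (\<mu> g) * F p (g p)) * (\<Sum>g\<in>A. of_real (\<mu> g) * F q (g q))))"
    using L0[OF fA I _ mu1, where X="\<lambda>p g. F p (g p)" and w=w] unfolding \<mu>_def by simp
  also have "(\<Sum>p\<in>I. \<Sum>q\<in>I. cnj (w p) * w q *
            ((\<Sum>g\<in>A. of_real (\<mu> g) * (cnj (F p (g p)) * F q (g q)))
             - cnj (\<Sum>g\<in>A. of_real (\<mu> g) * F p (g p)) * (\<Sum>g\<in>A. of_real (\<mu> g) * F q (g q))))
     = (\<Sum>p\<in>I. \<Sum>q\<in>I. cnj (w p) * w q * cov2 (marg2 R p q) (F p) (F q))"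
    using c by simp
  finally show ?thesis .
qed



lemma marg2_diag: "marg2 R p p = map_pmf (\<lambda>a. (a, a)) (marg1 R p)"
  unfolding marg2_def marg1_def by (simp add: map_pmf_comp)

lemma covI:
  fixes P :: "(nat \<Rightarrow> 'a::finite) pmf"
  assumes net: "bipartite_network n S adj"
    and model: "causally_consistent n S adj P Q"
    and d: "d \<ge> 2" and vp: "valid_perms d S adj \<pi>"
    and i: "i \<in> {1..n}" and j: "j \<in> {1..n}" and k: "k \<in> {1..d}" and l: "l \<in> {1..d}"
  shows "cov2 (marg2 (Q d \<pi>) (i,k) (j,l)) (f i) (f j)
     = (if infl_share S adj \<pi> (i,k) (j,l) then covariance P f i j else 0)"
proof -
  have H0: "\<forall>d \<pi>. d \<ge> 2 \<and> valid_perms d S adj \<pi> \<longrightarrow>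
        (\<forall>i\<in>{1..n}. \<forall>k\<in>{1..d}. marg1 (Q d \<pi>) (i, k) = marg1 P i) \<and>
        (\<forall>i\<in>{1..n}. \<forall>k\<in>{1..d}. \<forall>j\<in>{1..n}. \<forall>l\<in>{1..d}.
           i \<noteq> j \<and> infl_share S adj \<pi> (i, k) (j, l) \<longrightarrow>
             marg2 (Q d \<pi>) (i, k) (j, l) = marg2 P i j) \<and>
        (\<forall>i\<in>{1..n}. \<forall>k\<in>{1..d}. \<forall>j\<in>{1..n}. \<forall>l\<in>{1..d}.
           (i, k) \<noteq> (j, l) \<and> \<not> infl_share S adj \<pi> (i, k) (j, l) \<longrightarrow>
             marg2 (Q d \<pi>) (i, k) (j, l) = pair_pmf (marg1 (Q d \<pi>) (i, k)) (marg1 (Q d \<pi>) (j, l)))"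
    using model unfolding causally_consistent_def by (rule conjunct2)
  note H = H0[rule_format, OF conjI[OF d vp]]
  note M1 = H[THEN conjunct1, rule_format]
  note M2 = H[THEN conjunct2, THEN conjunct1, rule_format, OF _ _ _ _ conjI]
  note M3 = H[THEN conjunct2, THEN conjunct2, rule_format, OF _ _ _ _ conjI]
  show ?thesis
  proof (cases "(i,k) = (j,l)")
    case True
    then have ij: "i = j" "k = l" by auto
    obtain \<alpha> where "\<alpha> \<in> S" "i \<in> adj \<alpha>" using net i unfolding bipartite_network_def by blast
    then have sh: "infl_share S adj \<pi> (i,k) (j,l)" unfolding infl_share_def ij by auto
    have "marg2 (Q d \<pi>) (i,k) (j,l) = marg2 P i j"
      unfolding ij marg2_diag using M1[OF j l] by simp
    then show ?thesis using sh by (simp add: cov_marg2)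
  next
    case False
    show ?thesis
    proof (cases "infl_share S adj \<pi> (i,k) (j,l)")
      case True
      have "i \<noteq> j"
      proof
        assume ij: "i = j"
        then have "k \<noteq> l" using False by auto
        from True obtain \<alpha> where a: "\<alpha> \<in> S" "i \<in> adj \<alpha>" "\<pi> \<alpha> i k = \<pi> \<alpha> i l"
          unfolding infl_share_def ij by auto
        then have "\<pi> \<alpha> i permutes {1..d}" using vp unfolding valid_perms_def by blast
        then have "inj (\<pi> \<alpha> i)" by (rule permutes_inj)
        then show False using a(3) \<open>k \<noteq> l\<close> by (auto dest: injD)
      qed
      then show ?thesis using True M2[OF i k j l] by (simp add: cov_marg2)
    next
      case ns: False
      show ?thesis using M3[OF i k j l False ns] ns by (simp add: cov2_pair)
    qed
  qed
qed

lemma cov_C0: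
  fixes P :: "(nat \<Rightarrow> 'a::finite) pmf"
  assumes model: "causally_consistent n S adj P Q"
    and i: "i \<in> {1..n}" and j: "j \<in> {1..n}" and "i \<noteq> j" and "\<not> share_source S adj i j"
  shows "covariance P f i j = 0"
proof -
  have H0: "\<forall>i\<in>{1..n}. \<forall>j\<in>{1..n}. i \<noteq> j \<and> \<not> share_source S adj i j \<longrightarrow>
        marg2 P i j = pair_pmf (marg1 P i) (marg1 P j)"
    using model unfolding causally_consistent_def by (rule conjunct1)
  have "marg2 P i j = pair_pmf (marg1 P i) (marg1 P j)"
    using H0 assms(2-) by blast
  then show ?thesis by (simp add: cov_marg2 cov2_pair)
qed

lemma cov_herm:
  fixes P :: "(nat \<Rightarrow> 'a::finite) pmf"
  shows "covariance P f j i = cnj (covariance P f i j)"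
proof -
  have e: "measure_pmf.expectation P (\<lambda>x. h (x i) (x j)) = (\<Sum>ab\<in>UNIV. complex_of_real (pmf (marg2 P i j) ab) * h (fst ab) (snd ab))"
    for h :: "'a \<Rightarrow> 'a \<Rightarrow> complex"
    by (rule exp_marg2)
  show ?thesis
    unfolding covariance_def
    using e[of "\<lambda>a b. cnj (f j b) * f i a"] e[of "\<lambda>a b. cnj (f i a) * f j b"] e[of "\<lambda>a b. f i a"] e[of "\<lambda>a b. f j b"]
    by (simp add: cnj_sum mult_ac)
qed



lemma mod_ishift_inj: "a < d \<Longrightarrow> b < d \<Longrightarrow> (a + s) mod d = (b + s) mod d \<Longrightarrow> a = (b::nat)"
proof -
  have *: "a \<le> b \<Longrightarrow> b < d \<Longrightarrow> (a + s) mod d = (b + s) mod d \<Longrightarrow> a = b" for a b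
  proof -
    assume h: "a \<le> b" "b < d" "(a + s) mod d = (b + s) mod d"
    then have "d dvd (b + s) - (a + s)" using mod_eq_dvd_iff_nat[of "a+s" "b+s" d] by simp
    then have "d dvd b - a" by simp
    moreover have "b - a < d" using h by simp
    ultimately have "b - a = 0" using dvd_imp_le by (metis gr0I not_le)
    then show "a = b" using h by simp
  qed
  assume "a < d" "b < d" "(a + s) mod d = (b + s) mod d"
  then show "a = b" using *[of a b] *[of b a] by (cases "a \<le> b") auto
qed

lemma net_card: "bipartite_network n S adj \<Longrightarrow> \<alpha> \<in> S \<Longrightarrow> card (adj \<alpha>) = 2"
  unfolding bipartite_network_def by simp

lemma net_incomp: "bipartite_network n S adj \<Longrightarrow> \<alpha> \<in> S \<Longrightarrow> \<beta> \<in> S \<Longrightarrow> \<alpha> \<noteq> \<beta> \<Longrightarrow> \<not> adj \<alpha> \<subseteq> adj \<beta>"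
  unfolding bipartite_network_def by simp

definition ishift :: "nat \<Rightarrow> nat \<Rightarrow> nat \<Rightarrow> nat" where
  "ishift d s x = (if x \<in> {1..d} then (x - 1 + s) mod d + 1 else x)"

definition iperm :: "('s \<Rightarrow> nat set) \<Rightarrow> nat \<Rightarrow> ('s \<Rightarrow> nat) \<Rightarrow> 's \<Rightarrow> nat \<Rightarrow> nat \<Rightarrow> nat" where
  "iperm adj d s \<alpha> i = (if i = Max (adj \<alpha>) then ishift d (s \<alpha>) else id)"

lemma ishift_eq: "x \<in> {1..d} \<Longrightarrow> ishift d s x = (x - 1 + s) mod d + 1"
  unfolding ishift_def by (simp only: if_True)

lemma ishift_in: assumes "d > 0" "x \<in> {1..d}" shows "ishift d s x \<in> {1..d}"
proof -
  have "(x - 1 + s) mod d + 1 \<le> d" using assms(1) by (metis Suc_eq_plus1 Suc_leI mod_less_divisor)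
  then show ?thesis unfolding ishift_eq[OF assms(2)] by (simp only: atLeastAtMost_iff le_add2)
qed

lemma ishift_permutes: assumes "d > 0" shows "ishift d s permutes {1..d}"
proof (rule bij_imp_permutes)
  have inj: "inj_on (ishift d s) {1..d}"
  proof (rule inj_onI)
    fix x y assume x: "x \<in> {1..d}" and y: "y \<in> {1..d}" and e: "ishift d s x = ishift d s y"
    from e have m: "(x - 1 + s) mod d = (y - 1 + s) mod d" unfolding ishift_eq[OF x] ishift_eq[OF y] by simp
    have "x - 1 < d" "y - 1 < d" using x y by auto
    then have "x - 1 = y - 1" using m by (rule mod_ishift_inj)
    then show "x = y" using x y by (simp only: atLeastAtMost_iff) linarith
  qed
  have "ishift d s ` {1..d} \<subseteq> {1..d}" using ishift_in[OF assms] by blast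
  moreover have "card (ishift d s ` {1..d}) = card {1..d}" using card_image[OF inj] .
  ultimately have "ishift d s ` {1..d} = {1..d}" by (rule card_subset_eq[OF finite_atLeastAtMost])
  then show "bij_betw (ishift d s) {1..d} {1..d}" using inj unfolding bij_betw_def by blast
next
  fix x assume "x \<notin> {1..d}" then show "ishift d s x = x" unfolding ishift_def by (simp only: if_False)
qed

lemma valid_iperm: "d > 0 \<Longrightarrow> valid_perms d S adj (iperm adj d s)"
  unfolding valid_perms_def iperm_def using ishift_permutes permutes_id by (auto simp: id_def)

lemma omega_pow_d: "d > 0 \<Longrightarrow> cis (2*pi/d) ^ d = 1"
  by (simp add: Complex.DeMoivre)

lemma omega_mod: assumes "d > 0" shows "cis (2*pi/d) ^ (m mod d) = cis (2*pi/d) ^ m"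
proof -
  have "cis (2*pi/d) ^ m = cis (2*pi/d) ^ (d * (m div d) + m mod d)" by simp
  also have "\<dots> = (cis (2*pi/d) ^ d) ^ (m div d) * cis (2*pi/d) ^ (m mod d)"
    by (subst power_add) (simp only: power_mult)
  finally show ?thesis using omega_pow_d[OF assms] by simp
qed

lemma omega_ishift: assumes "d > 0" "l \<in> {1..d}"
  shows "cis (2*pi/d) ^ (ishift d s l) = cis (2*pi/d) ^ l * cis (2*pi/d) ^ s"
proof -
  have "cis (2*pi/d) ^ (ishift d s l) = cis (2*pi/d) ^ ((l - 1 + s) mod d) * cis (2*pi/d)"
    unfolding ishift_eq[OF assms(2)] by (simp only: power_Suc2 Suc_eq_plus1[symmetric])
  also have "\<dots> = cis (2*pi/d) ^ (l - 1 + s) * cis (2*pi/d)" using omega_mod[OF assms(1)] by simp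
  also have "\<dots> = cis (2*pi/d) ^ (l - 1 + 1 + s)" by (simp add: power_add)
  also have "l - 1 + 1 + s = l + s" using assms by simp
  finally show ?thesis by (simp add: power_add)
qed

lemma omega_norm: "cnj (cis a ^ k) * cis a ^ k = 1"
  using complex_norm_square[of "cis a ^ k"] by (simp add: norm_power mult.commute)

lemma omega_norm': "cnj (cis a) ^ k * cis a ^ k = 1"
  using omega_norm[of a k] by simp

definition Tsum :: "'s set \<Rightarrow> ('s \<Rightarrow> nat set) \<Rightarrow> ('s \<Rightarrow> nat \<Rightarrow> nat \<Rightarrow> nat) \<Rightarrow> nat \<Rightarrow> nat \<Rightarrow> nat \<Rightarrow> complex" where
  "Tsum S adj \<pi> d i j = (\<Sum>k\<in>{1..d}. \<Sum>l\<in>{1..d}.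
     if infl_share S adj \<pi> (i,k) (j,l) then cnj (cis (2*pi/d) ^ k) * cis (2*pi/d) ^ l else 0)"

lemma Tsum_diag:
  assumes net: "bipartite_network n S adj" and i: "i \<in> {1..n}" and vp: "valid_perms d S adj \<pi>"
  shows "Tsum S adj \<pi> d i i = of_nat d"
proof -
  obtain \<alpha> where a: "\<alpha> \<in> S" "i \<in> adj \<alpha>" using net i unfolding bipartite_network_def by blast
  have sh: "infl_share S adj \<pi> (i,k) (i,l) \<longleftrightarrow> k = l" if "k \<in> {1..d}" "l \<in> {1..d}" for k l
  proof
    assume "infl_share S adj \<pi> (i,k) (i,l)"
    then obtain \<beta> where b: "\<beta> \<in> S" "i \<in> adj \<beta>" "\<pi> \<beta> i k = \<pi> \<beta> i l"
      unfolding infl_share_def by auto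
    then have "\<pi> \<beta> i permutes {1..d}" using vp unfolding valid_perms_def by blast
    then have "inj (\<pi> \<beta> i)" by (rule permutes_inj)
    then show "k = l" using b(3) by (auto dest: injD)
  next
    assume "k = l" then show "infl_share S adj \<pi> (i,k) (i,l)" using a unfolding infl_share_def by auto
  qed
  have "Tsum S adj \<pi> d i i = (\<Sum>k\<in>{1..d}. \<Sum>l\<in>{1..d}.
     if k = l then cnj (cis (2*pi/d) ^ k) * cis (2*pi/d) ^ l else 0)"
    unfolding Tsum_def by (intro sum.cong refl) (simp add: sh)
  also have "\<dots> = (\<Sum>k\<in>{1..d}. (1::complex))"
    by (intro sum.cong refl) (simp add: omega_norm omega_norm')
  also have "\<dots> = of_nat d" by simp
  finally show ?thesis .
qed

lemma adj_pair:
  assumes net: "bipartite_network n S adj" and a: "\<alpha> \<in> S" and "i \<in> adj \<alpha>" "j \<in> adj \<alpha>" "i \<noteq> j"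
  shows "adj \<alpha> = {i, j}"
proof -
  have c: "card (adj \<alpha>) = 2" using net_card[OF net a] .
  then have f: "finite (adj \<alpha>)" by (intro card_ge_0_finite) simp
  have "{i, j} \<subseteq> adj \<alpha>" using assms by auto
  moreover have "card {i, j} = card (adj \<alpha>)" using c assms by simp
  ultimately have "{i, j} = adj \<alpha>" by (rule card_subset_eq[OF f])
  then show ?thesis by simp
qed

lemma src_unique:
  assumes net: "bipartite_network n S adj" and a: "\<alpha> \<in> S" "\<beta> \<in> S"
    and "i \<in> adj \<alpha>" "j \<in> adj \<alpha>" "i \<in> adj \<beta>" "j \<in> adj \<beta>" "i \<noteq> j"
  shows "\<alpha> = \<beta>"
proof (rule ccontr)
  assume ne: "\<alpha> \<noteq> \<beta>"
  have "adj \<alpha> = {i,j}" using adj_pair[OF net a(1)] assms by simp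
  moreover have "adj \<beta> = {i,j}" using adj_pair[OF net a(2)] assms by simp
  ultimately have "adj \<alpha> = adj \<beta>" by simp
  then show False using net_incomp[OF net a ne] by simp
qed

lemma Tsum_off:
  assumes net: "bipartite_network n S adj" and a: "\<alpha> \<in> S" and ij: "i \<in> adj \<alpha>" "j \<in> adj \<alpha>" "i \<noteq> j"
    and d: "d > 0"
  shows "Tsum S adj (iperm adj d s) d i j = (if i < j then of_nat d * cnj (cis (2*pi/d) ^ s \<alpha>) else of_nat d * cis (2*pi/d) ^ s \<alpha>)"
proof -
  define \<omega> where "\<omega> = cis (2*pi/d)"
  have sh: "infl_share S adj (iperm adj d s) (i,k) (j,l) \<longleftrightarrow> iperm adj d s \<alpha> i k = iperm adj d s \<alpha> j l" for k l
    unfolding infl_share_def using src_unique[OF net] a ij by auto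
  have adjeq: "adj \<alpha> = {i, j}" by (rule adj_pair[OF net a ij])
  show ?thesis
  proof (cases "i < j")
    case True
    then have mx: "Max (adj \<alpha>) = j" unfolding adjeq by (simp add: max_def)
    have "Tsum S adj (iperm adj d s) d i j = (\<Sum>k\<in>{1..d}. \<Sum>l\<in>{1..d}.
       if k = ishift d (s \<alpha>) l then cnj (\<omega> ^ k) * \<omega> ^ l else 0)"
      unfolding Tsum_def sh \<omega>_def iperm_def mx using ij(3) by simp
    also have "\<dots> = (\<Sum>l\<in>{1..d}. \<Sum>k\<in>{1..d}.
       if k = ishift d (s \<alpha>) l then cnj (\<omega> ^ k) * \<omega> ^ l else 0)"
      by (rule sum.swap)
    also have "\<dots> = (\<Sum>l\<in>{1..d}. cnj (\<omega> ^ ishift d (s \<alpha>) l) * \<omega> ^ l)"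
      using ishift_in[OF d] by (intro sum.cong refl) (simp add: sum.delta')
    also have "\<dots> = (\<Sum>l\<in>{1..d}. cnj (\<omega> ^ s \<alpha>))"
      unfolding \<omega>_def using omega_ishift[OF d] omega_norm
      by (intro sum.cong refl) (simp add: mult_ac)
    finally show ?thesis using True unfolding \<omega>_def by simp
  next
    case False
    then have gt: "j < i" using ij(3) by simp
    then have mx: "Max (adj \<alpha>) = i" unfolding adjeq by (simp add: max_def)
    have "Tsum S adj (iperm adj d s) d i j = (\<Sum>k\<in>{1..d}. \<Sum>l\<in>{1..d}.
       if ishift d (s \<alpha>) k = l then cnj (\<omega> ^ k) * \<omega> ^ l else 0)"
      unfolding Tsum_def sh \<omega>_def iperm_def mx using ij(3) by simp
    also have "\<dots> = (\<Sum>k\<in>{1..d}. cnj (\<omega> ^ k) * \<omega> ^ ishift d (s \<alpha>) k)"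
      using ishift_in[OF d] by (intro sum.cong refl) (simp add: sum.delta')
    also have "\<dots> = (\<Sum>k\<in>{1..d}. \<omega> ^ s \<alpha>)"
      unfolding \<omega>_def using omega_ishift[OF d] omega_norm
      by (intro sum.cong refl) (simp add: mult.assoc[symmetric])
    finally show ?thesis using False unfolding \<omega>_def by simp
  qed
qed



lemma sum_prod_split: "(\<Sum>p\<in>A \<times> B. g p) = (\<Sum>i\<in>A. \<Sum>k\<in>B. g (i,k))"
  by (subst sum.cartesian_product) simp

lemma sum_pairs_swap:
  "(\<Sum>p\<in>A \<times> B. \<Sum>q\<in>A \<times> B. X p q) = (\<Sum>i\<in>A. \<Sum>j\<in>A. \<Sum>k\<in>B. \<Sum>l\<in>B. X (i,k) (j,l))"
proof -
  have "(\<Sum>p\<in>A \<times> B. \<Sum>q\<in>A \<times> B. X p q) = (\<Sum>i\<in>A. \<Sum>k\<in>B. \<Sum>j\<in>A. \<Sum>l\<in>B. X (i,k) (j,l))"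
    unfolding sum_prod_split ..
  also have "\<dots> = (\<Sum>i\<in>A. \<Sum>j\<in>A. \<Sum>k\<in>B. \<Sum>l\<in>B. X (i,k) (j,l))"
    by (rule sum.cong[OF refl], rule sum.swap)
  finally show ?thesis .
qed

lemma main_bound:
  fixes n :: nat and S :: "'s set" and adj :: "'s \<Rightarrow> nat set"
    and P :: "(nat \<Rightarrow> 'a::finite) pmf"
    and Q :: "nat \<Rightarrow> ('s \<Rightarrow> nat \<Rightarrow> nat \<Rightarrow> nat) \<Rightarrow> (nat \<times> nat \<Rightarrow> 'a) pmf"
    and f :: "nat \<Rightarrow> 'a \<Rightarrow> complex"
    and \<epsilon> :: "'s \<Rightarrow> complex"
    and \<gamma> :: "nat \<Rightarrow> nat \<Rightarrow> complex" and d :: nat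
  assumes net: "bipartite_network n S adj"
    and model: "causally_consistent n S adj P Q"
    and eps: "\<forall>\<alpha>\<in>S. cmod (\<epsilon> \<alpha>) = 1"
    and diag: "\<forall>i\<in>{1..n}. \<gamma> i i = 1"
    and up: "\<forall>\<alpha>\<in>S. \<forall>i\<in>adj \<alpha>. \<forall>j\<in>adj \<alpha>. i < j \<longrightarrow> \<gamma> i j = \<epsilon> \<alpha>"
    and low: "\<forall>\<alpha>\<in>S. \<forall>i\<in>adj \<alpha>. \<forall>j\<in>adj \<alpha>. i > j \<longrightarrow> \<gamma> i j = cnj (\<epsilon> \<alpha>)"
    and d: "d \<ge> 2"
  shows "Re (\<Sum>i\<in>{1..n}. \<Sum>j\<in>{1..n}. cnj (v i) * (covariance P f i j * \<gamma> i j) * v j)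
     \<ge> - (2 * pi * (\<Sum>i\<in>{1..n}. \<Sum>j\<in>{1..n}. cmod (v i) * cmod (v j) * cmod (covariance P f i j))) / d"
proof -
  define C where "C = covariance P f"
  define N where "N = {1..n}"
  define D where "D = {1..d}"
  define \<omega> where "\<omega> = cis (2*pi/d)"
  have d0: "d > 0" using d by simp
  have "\<forall>\<alpha>\<in>S. \<exists>t::nat. cmod (\<omega> ^ t - cnj (\<epsilon> \<alpha>)) \<le> 2*pi/d"
    using eps approx_root[OF _ d0] unfolding \<omega>_def by simp
  then obtain s where hs: "\<And>\<alpha>. \<alpha> \<in> S \<Longrightarrow> cmod (\<omega> ^ s \<alpha> - cnj (\<epsilon> \<alpha>)) \<le> 2*pi/d"
    by metis
  define \<pi> where "\<pi> = iperm adj d s"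
  have vp: "valid_perms d S adj \<pi>" unfolding \<pi>_def by (rule valid_iperm[OF d0])
  define T where "T = (\<lambda>i j. Tsum S adj \<pi> d i j)"
  have fI: "finite (N \<times> D)" unfolding N_def D_def by simp
  have L: "0 \<le> Re (\<Sum>p\<in>N \<times> D. \<Sum>q\<in>N \<times> D. cnj (v (fst p) * \<omega> ^ snd p) * (v (fst q) * \<omega> ^ snd q)
      * cov2 (marg2 (Q d \<pi>) p q) (f (fst p)) (f (fst q)))"
    using L2[OF fI, of "\<lambda>p. v (fst p) * \<omega> ^ snd p" "Q d \<pi>" "\<lambda>p. f (fst p)"] by simp
  have eqT: "(\<Sum>p\<in>N \<times> D. \<Sum>q\<in>N \<times> D. cnj (v (fst p) * \<omega> ^ snd p) * (v (fst q) * \<omega> ^ snd q)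
      * cov2 (marg2 (Q d \<pi>) p q) (f (fst p)) (f (fst q)))
    = (\<Sum>i\<in>N. \<Sum>j\<in>N. cnj (v i) * v j * C i j * T i j)"
    unfolding sum_pairs_swap
  proof (intro sum.cong refl)
    fix i j assume i: "i \<in> N" and j: "j \<in> N"
    have "(\<Sum>k\<in>D. \<Sum>l\<in>D. cnj (v (fst (i, k)) * \<omega> ^ snd (i, k)) * (v (fst (j, l)) * \<omega> ^ snd (j, l)) *
             cov2 (marg2 (Q d \<pi>) (i, k) (j, l)) (f (fst (i, k))) (f (fst (j, l))))
       = (\<Sum>k\<in>D. \<Sum>l\<in>D. cnj (v i) * v j * C i j *
           (if infl_share S adj \<pi> (i,k) (j,l) then cnj (\<omega> ^ k) * \<omega> ^ l else 0))"
    proof (intro sum.cong refl)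
      fix k l assume k: "k \<in> D" and l: "l \<in> D"
      show "cnj (v (fst (i, k)) * \<omega> ^ snd (i, k)) * (v (fst (j, l)) * \<omega> ^ snd (j, l)) *
             cov2 (marg2 (Q d \<pi>) (i, k) (j, l)) (f (fst (i, k))) (f (fst (j, l)))
          = cnj (v i) * v j * C i j *
           (if infl_share S adj \<pi> (i,k) (j,l) then cnj (\<omega> ^ k) * \<omega> ^ l else 0)"
        using covI[OF net model d vp, of i j k l f] i j k l unfolding N_def D_def C_def
        by (simp add: mult_ac)
    qed
    also have "\<dots> = cnj (v i) * v j * C i j * T i j"
      unfolding T_def Tsum_def D_def \<omega>_def by (simp add: sum_distrib_left)
    finally show "(\<Sum>k\<in>D. \<Sum>l\<in>D. cnj (v (fst (i, k)) * \<omega> ^ snd (i, k)) * (v (fst (j, l)) * \<omega> ^ snd (j, l)) *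
             cov2 (marg2 (Q d \<pi>) (i, k) (j, l)) (f (fst (i, k))) (f (fst (j, l))))
       = cnj (v i) * v j * C i j * T i j" .
  qed
  have L': "0 \<le> Re (\<Sum>i\<in>N. \<Sum>j\<in>N. cnj (v i) * v j * C i j * T i j)"
    using L by (simp only: eqT)
  have err: "cmod (C i j * (of_nat d * \<gamma> i j - T i j)) \<le> cmod (C i j) * (2*pi)"
    if i: "i \<in> N" and j: "j \<in> N" for i j
  proof (cases "i = j")
    case True
    have "T i j = of_nat d" unfolding T_def True using Tsum_diag[OF net _ vp] j unfolding N_def by simp
    then show ?thesis using diag j True unfolding N_def by simp
  next
    case ne: False
    show ?thesis
    proof (cases "share_source S adj i j")
      case False
      then have "C i j = 0" unfolding C_def using cov_C0[OF model] i j ne unfolding N_def by blast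
      then show ?thesis by simp
    next
      case True
      then obtain \<alpha> where a: "\<alpha> \<in> S" "i \<in> adj \<alpha>" "j \<in> adj \<alpha>" unfolding share_source_def by blast
      have Td: "T i j = (if i < j then of_nat d * cnj (\<omega> ^ s \<alpha>) else of_nat d * \<omega> ^ s \<alpha>)"
        unfolding T_def \<pi>_def \<omega>_def using Tsum_off[OF net a ne d0] .
      have bnd: "cmod (of_nat d * \<gamma> i j - T i j) \<le> 2*pi"
      proof (cases "i < j")
        case True
        then have "of_nat d * \<gamma> i j - T i j = of_nat d * cnj (cnj (\<epsilon> \<alpha>) - \<omega> ^ s \<alpha>)"
          using Td up a by (simp add: algebra_simps)
        moreover have "cmod (\<epsilon> \<alpha> - cnj \<omega> ^ s \<alpha>) = cmod (cnj (\<epsilon> \<alpha>) - \<omega> ^ s \<alpha>)"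
          by (metis complex_mod_cnj complex_cnj_diff complex_cnj_cnj complex_cnj_power)
        ultimately have "cmod (of_nat d * \<gamma> i j - T i j) = real d * cmod (\<omega> ^ s \<alpha> - cnj (\<epsilon> \<alpha>))"
          by (simp add: norm_mult norm_minus_commute)
        also have "\<dots> \<le> real d * (2*pi/d)" using hs[OF a(1)] by (intro mult_left_mono) auto
        also have "\<dots> = 2*pi" using d0 by simp
        finally show ?thesis .
      next
        case False
        then have "i > j" using ne by simp
        then have "of_nat d * \<gamma> i j - T i j = of_nat d * (cnj (\<epsilon> \<alpha>) - \<omega> ^ s \<alpha>)"
          using Td low a False by (simp add: algebra_simps)
        then have "cmod (of_nat d * \<gamma> i j - T i j) = real d * cmod (\<omega> ^ s \<alpha> - cnj (\<epsilon> \<alpha>))"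
          by (simp add: norm_mult norm_minus_commute)
        also have "\<dots> \<le> real d * (2*pi/d)" using hs[OF a(1)] by (intro mult_left_mono) auto
        also have "\<dots> = 2*pi" using d0 by simp
        finally show ?thesis .
      qed
      show ?thesis unfolding norm_mult using bnd by (intro mult_left_mono) auto
    qed
  qed
  define q where "q = (\<Sum>i\<in>N. \<Sum>j\<in>N. cnj (v i) * (C i j * \<gamma> i j) * v j)"
  define K where "K = (\<Sum>i\<in>N. \<Sum>j\<in>N. cmod (v i) * cmod (v j) * cmod (C i j))"
  have split: "of_nat d * q = (\<Sum>i\<in>N. \<Sum>j\<in>N. cnj (v i) * v j * C i j * T i j)
      + (\<Sum>i\<in>N. \<Sum>j\<in>N. cnj (v i) * v j * (C i j * (of_nat d * \<gamma> i j - T i j)))"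
    unfolding q_def by (simp add: sum_distrib_left sum.distrib[symmetric] algebra_simps)
  have "cmod (\<Sum>i\<in>N. \<Sum>j\<in>N. cnj (v i) * v j * (C i j * (of_nat d * \<gamma> i j - T i j)))
      \<le> (\<Sum>i\<in>N. \<Sum>j\<in>N. cmod (cnj (v i) * v j * (C i j * (of_nat d * \<gamma> i j - T i j))))"
    by (rule order_trans[OF norm_sum sum_mono[OF norm_sum]])
  also have "\<dots> \<le> (\<Sum>i\<in>N. \<Sum>j\<in>N. cmod (v i) * cmod (v j) * (cmod (C i j) * (2*pi)))"
  proof (intro sum_mono)
    fix i j assume ij: "i \<in> N" "j \<in> N"
    have ee: "cmod (C i j) * cmod (of_nat d * \<gamma> i j - T i j) \<le> cmod (C i j) * (2*pi)"
      using err[OF ij] by (simp only: norm_mult)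
    show "cmod (cnj (v i) * v j * (C i j * (of_nat d * \<gamma> i j - T i j)))
        \<le> cmod (v i) * cmod (v j) * (cmod (C i j) * (2*pi))"
      unfolding norm_mult complex_mod_cnj by (rule mult_left_mono[OF ee]) simp
  qed
  also have "\<dots> = 2 * pi * K" unfolding K_def by (simp add: sum_distrib_left mult_ac)
  finally have e2: "cmod (\<Sum>i\<in>N. \<Sum>j\<in>N. cnj (v i) * v j * (C i j * (of_nat d * \<gamma> i j - T i j))) \<le> 2 * pi * K" .
  have "Re (of_nat d * q) \<ge> - (2 * pi * K)"
    using L' e2 abs_Re_le_cmod[of "\<Sum>i\<in>N. \<Sum>j\<in>N. cnj (v i) * v j * (C i j * (of_nat d * \<gamma> i j - T i j))"]
    unfolding split by simp
  then have "real d * Re q \<ge> - (2 * pi * K)" by simp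
  then have "Re q \<ge> - (2 * pi * K) / d" using d0 by (simp add: field_simps)
  then show ?thesis unfolding q_def K_def C_def N_def .
qed



theorem mainTheorem6:
  fixes n :: nat and S :: "'s set" and adj :: "'s \<Rightarrow> nat set"
    and P :: "(nat \<Rightarrow> 'a::finite) pmf"
    and Q :: "nat \<Rightarrow> ('s \<Rightarrow> nat \<Rightarrow> nat \<Rightarrow> nat) \<Rightarrow> (nat \<times> nat \<Rightarrow> 'a) pmf"
    and f :: "nat \<Rightarrow> 'a \<Rightarrow> complex"
    and \<epsilon> :: "'s \<Rightarrow> complex"
    and \<gamma> :: "nat \<Rightarrow> nat \<Rightarrow> complex"
  assumes net: "bipartite_network n S adj"
    and model: "causally_consistent n S adj P Q"
    and eps: "\<forall>\<alpha>\<in>S. cmod (\<epsilon> \<alpha>) = 1"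
    and herm: "\<forall>i\<in>{1..n}. \<forall>j\<in>{1..n}. \<gamma> j i = cnj (\<gamma> i j)"
    and diag: "\<forall>i\<in>{1..n}. \<gamma> i i = 1"
    and up: "\<forall>\<alpha>\<in>S. \<forall>i\<in>adj \<alpha>. \<forall>j\<in>adj \<alpha>. i < j \<longrightarrow> \<gamma> i j = \<epsilon> \<alpha>"
    and low: "\<forall>\<alpha>\<in>S. \<forall>i\<in>adj \<alpha>. \<forall>j\<in>adj \<alpha>. i > j \<longrightarrow> \<gamma> i j = cnj (\<epsilon> \<alpha>)"
  shows "psd n (schur_prod (covariance P f) \<gamma>)"
proof -
  define M where "M = schur_prod (covariance P f) \<gamma>"
  have H: "\<forall>i\<in>{1..n}. \<forall>j\<in>{1..n}. M j i = cnj (M i j)"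
  proof (intro ballI)
    fix i j assume i: "i \<in> {1..n}" and j: "j \<in> {1..n}"
    have "covariance P f j i = cnj (covariance P f i j)" by (rule cov_herm)
    moreover have "\<gamma> j i = cnj (\<gamma> i j)" using herm i j by blast
    ultimately show "M j i = cnj (M i j)" unfolding M_def schur_prod_def by simp
  qed
  have QF: "Im q = 0 \<and> 0 \<le> Re q" if qd: "q = (\<Sum>i\<in>{1..n}. \<Sum>j\<in>{1..n}. cnj (v i) * M i j * v j)" for v q
  proof -
    have "cnj q = (\<Sum>i\<in>{1..n}. \<Sum>j\<in>{1..n}. v i * cnj (M i j) * cnj (v j))"
      unfolding qd by (simp add: cnj_sum)
    also have "\<dots> = (\<Sum>i\<in>{1..n}. \<Sum>j\<in>{1..n}. cnj (v j) * M j i * v i)"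
    proof (intro sum.cong refl)
      fix i j assume "i \<in> {1..n}" "j \<in> {1..n}"
      then have "M j i = cnj (M i j)" using H by blast
      then have e: "cnj (M i j) = M j i" by (rule sym)
      show "v i * cnj (M i j) * cnj (v j) = cnj (v j) * M j i * v i" unfolding e by (simp add: mult_ac)
    qed
    also have "\<dots> = q" unfolding qd by (rule sum.swap)
    finally have cq: "cnj q = q" .
    have im: "Im q = 0"
    proof -
      have "Im (cnj q) = - Im q" by simp
      then show ?thesis using cq by simp
    qed
    define K where "K = (\<Sum>i\<in>{1..n}. \<Sum>j\<in>{1..n}. cmod (v i) * cmod (v j) * cmod (covariance P f i j))"
    have K0: "K \<ge> 0" unfolding K_def by (intro sum_nonneg) simp
    have B: "Re q \<ge> - (2 * pi * K) / real d" if "d \<ge> 2" for d :: nat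
      using main_bound[OF net model eps diag up low that, of v] unfolding qd M_def K_def schur_prod_def .
    have "0 \<le> Re q"
    proof (rule ccontr)
      assume "\<not> 0 \<le> Re q"
      then have neg: "- Re q > 0" by simp
      define d where "d = nat \<lceil>2 * pi * K / (- Re q)\<rceil> + 2"
      have d2: "d \<ge> 2" unfolding d_def by simp
      define x where "x = 2 * pi * K / (- Re q)"
      have x0: "x \<ge> 0" unfolding x_def
        by (rule divide_nonneg_pos) (use K0 neg in auto)
      then have c0: "\<lceil>x\<rceil> \<ge> 0" by simp
      have "real d = of_int \<lceil>x\<rceil> + 2" unfolding d_def x_def[symmetric] using c0 by simp
      moreover have "x \<le> of_int \<lceil>x\<rceil>" by (rule le_of_int_ceiling)
      ultimately have "real d > 2 * pi * K / (- Re q)" unfolding x_def by linarith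
      then have "real d * (- Re q) > 2 * pi * K" using neg by (simp add: field_simps)
      then have "2 * pi * K / real d < - Re q" using d2 by (simp add: field_simps)
      then show False using B[OF d2] by simp
    qed
    then show ?thesis using im by simp
  qed
  have QF2: "\<forall>v. Im (\<Sum>i\<in>{1..n}. \<Sum>j\<in>{1..n}. cnj (v i) * M i j * v j) = 0 \<and>
       0 \<le> Re (\<Sum>i\<in>{1..n}. \<Sum>j\<in>{1..n}. cnj (v i) * M i j * v j)"
    using QF[OF refl] by blast
  show ?thesis unfolding psd_def Let_def M_def[symmetric] using H QF2 by (rule conjI)
qed

end
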